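(* Let $M$ be a preordered commutative monoid (written multiplicatively, with unit $1$) such that $x\ge 1$ for all $x\in M$, and let $g\in M$ be a generator. For $x,y\in M$ and $r\in\mathbb{R}_{\ge 0}$ the following are equivalent: (1) $r$ is a regularized rate from $x$ to $y$; (2) for every $\delta>0$ there exists $n\in\mathbb{N}$, $n\ge 1$, such that $x^n g^{\lfloor\delta n\rfloor}\ge y^{\lceil rn\rceil}$.
   Context: A preordered commutative monoid is a set $M$ with an associative, commutative binary operation with neutral element $1$, and a reflexive transitive relation $\le$ such that $x\ge y$ implies $xz\ge yz$ for all $x,y,z$. An element $g\in M$ is a generator if for every $x\in M$ there is $n\in\mathbb{N}$ with $g^n\ge x$. Given a generator $g$, a number $r\in\mathbb{R}_{\ge0}$ is a regularized rate from $x$ to $y$ if for every $\delta>0$ and every neighbourhood $U$ of $r$ there are $m,n\in\mathbb{N}$ with $\frac{m}{n}\in U$ and $d\in\mathbb{N}$ with $d\le\delta\max(m,n)$ such that $x^n g^d\ge y^m$. *)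

theory Defs
  imports Complex_Main
begin

text \<open>The preordered commutative monoid is a type of class comm_monoid_mult
  (multiplication, unit 1) together with class preorder (reflexive transitive \<le>);
  compatibility of the order with multiplication is an explicit hypothesis.\<close>

definition is_generator :: "'a::{comm_monoid_mult, preorder} \<Rightarrow> bool" where
  "is_generator g \<longleftrightarrow> (\<forall>x. \<exists>n::nat. g ^ n \<ge> x)"

definition is_regularized_rate ::
  "'a::{comm_monoid_mult, preorder} \<Rightarrow> 'a \<Rightarrow> 'a \<Rightarrow> real \<Rightarrow> bool" where
  "is_regularized_rate g x y r \<longleftrightarrow>
     (\<forall>\<delta>>0. \<forall>U::real set. open U \<and> r \<in> U \<longrightarrow>
        (\<exists>m n d::nat. n > 0 \<and> real m / real n \<in> U \<and>
            real d \<le> \<delta> * real (max m n) \<and> x ^ n * g ^ d \<ge> y ^ m))"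

end

theory Submission
  imports Defs "HOL-Analysis.Analysis"
begin

lemma mm2:
  fixes a b c d :: "'a::{comm_monoid_mult, preorder}"
  assumes mono: "\<And>a b c :: 'a. a \<ge> b \<Longrightarrow> a * c \<ge> b * c"
  shows "a \<ge> b \<Longrightarrow> c \<ge> d \<Longrightarrow> a * c \<ge> b * d"
proof -
  assume h: "a \<ge> b" "c \<ge> d"
  have "a * c \<ge> b * c" using mono h(1) .
  moreover have "c * b \<ge> d * b" using mono h(2) .
  ultimately show ?thesis by (metis mult.commute order_trans)
qed

lemma pw_mono:
  fixes a b :: "'a::{comm_monoid_mult, preorder}"
  assumes mono: "\<And>a b c :: 'a. a \<ge> b \<Longrightarrow> a * c \<ge> b * c"
  shows "a \<ge> b \<Longrightarrow> a ^ n \<ge> b ^ n"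
  by (induction n) (auto intro: mm2[OF mono])

lemma pw_le:
  fixes a :: "'a::{comm_monoid_mult, preorder}"
  assumes mono: "\<And>a b c :: 'a. a \<ge> b \<Longrightarrow> a * c \<ge> b * c"
    and ge_one: "\<And>a :: 'a. a \<ge> 1"
  shows "m \<le> n \<Longrightarrow> a ^ m \<le> a ^ n"
proof -
  assume "m \<le> n"
  then have "a ^ n = a ^ (n - m) * a ^ m" by (simp add: power_add[symmetric])
  moreover have "a ^ (n - m) * a ^ m \<ge> 1 * a ^ m" using mono ge_one by blast
  ultimately show ?thesis by simp
qed

theorem mainTheorem2:
  fixes g x y :: "'a::{comm_monoid_mult, preorder}" and r :: real
  assumes mono: "\<And>a b c :: 'a. a \<ge> b \<Longrightarrow> a * c \<ge> b * c"
    and ge_one: "\<And>a :: 'a. a \<ge> 1"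
    and gen: "is_generator g"
    and r_nonneg: "r \<ge> 0"
  shows "is_regularized_rate g x y r \<longleftrightarrow>
    (\<forall>\<delta>::real. \<delta> > 0 \<longrightarrow>
       (\<exists>n::nat. n \<ge> 1 \<and>
          x ^ n * g ^ nat \<lfloor>\<delta> * real n\<rfloor> \<ge> y ^ nat \<lceil>r * real n\<rceil>))"
proof
  assume R: "is_regularized_rate g x y r"
  show "\<forall>\<delta>::real. \<delta> > 0 \<longrightarrow>
       (\<exists>n::nat. n \<ge> 1 \<and>
          x ^ n * g ^ nat \<lfloor>\<delta> * real n\<rfloor> \<ge> y ^ nat \<lceil>r * real n\<rceil>)"
  proof (intro allI impI)
    fix \<delta> :: real assume dp: "\<delta> > 0"
    obtain c where c: "g ^ c \<ge> y" using gen unfolding is_generator_def by blast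
    define \<delta>' where "\<delta>' = \<delta> / (4 * (r + 1))"
    define \<epsilon> where "\<epsilon> = min 1 (\<delta> / (4 * (real c + 1)))"
    have d'p: "\<delta>' > 0" using dp r_nonneg by (simp add: \<delta>'_def)
    have ep: "\<epsilon> > 0" using dp by (simp add: \<epsilon>_def)
    have e1: "\<epsilon> \<le> 1" by (simp add: \<epsilon>_def)
    have ce: "real c * \<epsilon> \<le> \<delta> / 4"
    proof -
      have "real c * \<epsilon> \<le> (real c + 1) * (\<delta> / (4 * (real c + 1)))"
        using dp by (intro mult_mono) (auto simp: \<epsilon>_def)
      also have "\<dots> = \<delta> / 4" proof - have "real c + 1 > 0" by simp then show ?thesis by (simp add: field_simps) qed
      finally show ?thesis .
    qed
    obtain m n d :: nat where mnd: "n > 0" "real m / real n \<in> ball r \<epsilon>"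
      "real d \<le> \<delta>' * real (max m n)" "x ^ n * g ^ d \<ge> y ^ m"
      using R d'p ep unfolding is_regularized_rate_def by (meson centre_in_ball open_ball)
    have np: "real n > 0" using mnd(1) by simp
    have dist: "\<bar>real m / real n - r\<bar> < \<epsilon>" using mnd(2) by (simp add: dist_real_def abs_minus_commute)
    have mlt: "real m < real n * (r + \<epsilon>)" and mgt: "r * real n - real m < \<epsilon> * real n"
    proof -
      have "real m / real n < r + \<epsilon>" "r - \<epsilon> < real m / real n" using dist by auto
      then show "real m < real n * (r + \<epsilon>)" "r * real n - real m < \<epsilon> * real n"
        using np by (auto simp: field_simps)
    qed
    have maxle: "real (max m n) \<le> real n * (r + 1)"
    proof -
      have a1: "real n * (r + \<epsilon>) \<le> real n * (r + 1)" using e1 np by (intro mult_left_mono) auto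
      have a2: "real n * 1 \<le> real n * (r + 1)" using r_nonneg np by (intro mult_left_mono) auto
      show ?thesis using a1 a2 mlt by (simp add: of_nat_max)
    qed
    have dle: "real d \<le> \<delta> / 4 * real n"
    proof -
      have "real d \<le> \<delta>' * (real n * (r + 1))"
        using mnd(3) maxle d'p by (meson mult_left_mono less_imp_le order_trans)
      also have "\<dots> = \<delta> / 4 * real n" using r_nonneg by (simp add: \<delta>'_def field_simps)
      finally show ?thesis .
    qed
    obtain k :: nat where k: "real k \<ge> 2 * (real c + 1) / \<delta>" "k \<ge> 1"
    proof -
      obtain k0 :: nat where "2 * (real c + 1) / \<delta> \<le> real k0" using real_arch_simple by blast
      then show ?thesis using that[of "k0 + 1"] by simp
    qed
    define N where "N = k * n"
    have Nr: "real N = real k * real n" by (simp add: N_def)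
    have kge: "real k \<ge> 1" using k(2) by simp
    have cN: "real c + 1 \<le> \<delta> / 2 * real N"
    proof -
      have "real c + 1 = (2 * (real c + 1) / \<delta>) * (\<delta> / 2)" using dp by simp
      also have "\<dots> \<le> real k * (\<delta> / 2)" using k(1) dp by (intro mult_right_mono) auto
      also have "\<dots> \<le> real k * real n * (\<delta> / 2)" using dp mnd(1) kge
        by (simp add: mult_right_mono)
      finally show ?thesis by (simp add: Nr field_simps)
    qed
    define e where "e = nat (\<lceil>r * real N\<rceil> - int (k * m))"
    define T where "T = k * d + c * e"
    have ele: "real e \<le> real k * \<epsilon> * real n + 1"
    proof -
      have "real_of_int \<lceil>r * real N\<rceil> < r * real N + 1" by linarith
      moreover have "r * real N - real (k * m) \<le> real k * (\<epsilon> * real n)"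
      proof -
        have "real k * (r * real n - real m) \<le> real k * (\<epsilon> * real n)"
          using mgt by (intro mult_left_mono) auto
        then show ?thesis by (simp add: Nr algebra_simps)
      qed
      moreover have "real k * (\<epsilon> * real n) \<ge> 0" using ep np by simp
      moreover have "real e = max 0 (real_of_int \<lceil>r * real N\<rceil> - real k * real m)"
      proof -
        have zr: "real_of_int (\<lceil>r * real N\<rceil> - int (k * m)) = real_of_int \<lceil>r * real N\<rceil> - real k * real m"
          by simp
        have "real e = max 0 (real_of_int (\<lceil>r * real N\<rceil> - int (k * m)))"
          unfolding e_def by (cases "\<lceil>r * real N\<rceil> - int (k * m) \<ge> 0") (auto simp: max_def simp del: of_int_diff)
        then show ?thesis by (simp only: zr)
      qed
      ultimately have "real e \<le> real k * (\<epsilon> * real n) + 1"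
        by (cases "real_of_int \<lceil>r * real N\<rceil> - real k * real m \<ge> 0") (simp_all add: max_def)
      then show ?thesis by (simp add: mult.assoc)
    qed
    have Tle: "real T \<le> \<delta> * real N"
    proof -
      have a: "real (k * d) \<le> \<delta> / 4 * real N"
      proof -
        have "real k * real d \<le> real k * (\<delta> / 4 * real n)" using dle by (intro mult_left_mono) auto
        then show ?thesis by (simp add: Nr algebra_simps)
      qed
      have "real (c * e) \<le> real c * (real k * \<epsilon> * real n + 1)"
        using ele by (simp add: mult_left_mono)
      also have "\<dots> = real c * \<epsilon> * real N + real c" by (simp add: Nr algebra_simps)
      also have "\<dots> \<le> \<delta> / 4 * real N + real c"
        using ce by (intro add_right_mono mult_right_mono) auto
      finally show ?thesis using a cN by (simp add: T_def)
    qed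
    have TleF: "T \<le> nat \<lfloor>\<delta> * real N\<rfloor>" using Tle by (rule le_nat_floor)
    have expo: "nat \<lceil>r * real N\<rceil> \<le> m * k + e"
    proof -
      have "int e \<ge> \<lceil>r * real N\<rceil> - int (k * m)" by (simp add: e_def)
      then have "\<lceil>r * real N\<rceil> \<le> int (m * k + e)" by (simp add: mult.commute)
      then show ?thesis by (rule nat_le_iff[THEN iffD2])
    qed
    have "y ^ nat \<lceil>r * real N\<rceil> \<le> y ^ (m * k + e)" using pw_le[OF mono ge_one expo] .
    also have "y ^ (m * k + e) = (y ^ m) ^ k * y ^ e" by (simp add: power_add power_mult)
    also have "\<dots> \<le> (x ^ n * g ^ d) ^ k * (g ^ c) ^ e"
      by (intro mm2[OF mono] pw_mono[OF mono] mnd(4) c)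
    also have "(x ^ n * g ^ d) ^ k * (g ^ c) ^ e = x ^ N * g ^ T"
      by (simp add: power_mult_distrib power_mult[symmetric] power_add N_def T_def mult.commute mult.left_commute)
    also have "\<dots> \<le> x ^ N * g ^ nat \<lfloor>\<delta> * real N\<rfloor>"
      by (intro mm2[OF mono] order_refl pw_le[OF mono ge_one TleF])
    finally have "y ^ nat \<lceil>r * real N\<rceil> \<le> x ^ N * g ^ nat \<lfloor>\<delta> * real N\<rfloor>" .
    moreover have "N \<ge> 1" using k(2) mnd(1) by (simp add: N_def)
    ultimately show "\<exists>n::nat. n \<ge> 1 \<and>
          x ^ n * g ^ nat \<lfloor>\<delta> * real n\<rfloor> \<ge> y ^ nat \<lceil>r * real n\<rceil>" by blast
  qed
next
  assume H: "\<forall>\<delta>::real. \<delta> > 0 \<longrightarrow>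
       (\<exists>n::nat. n \<ge> 1 \<and>
          x ^ n * g ^ nat \<lfloor>\<delta> * real n\<rfloor> \<ge> y ^ nat \<lceil>r * real n\<rceil>)"
  show "is_regularized_rate g x y r"
    unfolding is_regularized_rate_def
  proof (intro allI impI, elim conjE)
    fix \<delta> :: real and U :: "real set"
    assume dp: "\<delta> > 0" and U: "open U" "r \<in> U"
    obtain \<epsilon> where ep: "\<epsilon> > 0" and eU: "ball r \<epsilon> \<subseteq> U"
      using U openE by blast
    obtain n where n: "n \<ge> 1" "x ^ n * g ^ nat \<lfloor>\<delta> * real n\<rfloor> \<ge> y ^ nat \<lceil>r * real n\<rceil>"
      using H dp by blast
    define a where "a = nat \<lceil>r * real n\<rceil>"
    define b where "b = nat \<lfloor>\<delta> * real n\<rfloor>"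
    obtain k :: nat where k: "real k > 1 / \<epsilon>" using reals_Archimedean2 by blast
    have kp: "real k > 0" using k ep by (smt (verit) divide_pos_pos)
    define N where "N = k * n"
    have Nr: "real N = real k * real n" by (simp add: N_def)
    have np: "real n \<ge> 1" using n(1) by simp
    have Np: "real N > 0" using kp np by (simp add: Nr)
    define m where "m = nat \<lceil>r * real N\<rceil>"
    define d where "d = k * b"
    have mge: "real m \<ge> r * real N" by (simp add: m_def real_nat_ceiling_ge)
    have mlt: "real m < r * real N + 1" using r_nonneg Np by (simp add: m_def) linarith
    have kN: "real k \<le> real N" using np kp by (simp add: Nr)
    have "1 / real N < \<epsilon>"
    proof -
      have "1 / \<epsilon> < real N" using k kN by linarith
      then show ?thesis using ep Np by (simp add: field_simps)
    qed
    moreover have "real m / real N - r < 1 / real N"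
    proof -
      have "(real m - r * real N) / real N < 1 / real N"
        using mlt Np by (intro divide_strict_right_mono) auto
      moreover have "(real m - r * real N) / real N = real m / real N - r"
        using Np by (simp add: diff_divide_distrib)
      ultimately show ?thesis by simp
    qed
    moreover have "real m / real N - r \<ge> 0" using mge Np by (simp add: field_simps)
    ultimately have "real m / real N \<in> ball r \<epsilon>" by (simp add: dist_real_def)
    then have mU: "real m / real N \<in> U" using eU by blast
    have "real b \<le> \<delta> * real n" unfolding b_def using dp np by simp
    then have "real d \<le> \<delta> * real N"
    proof -
      assume "real b \<le> \<delta> * real n"
      then have "real k * real b \<le> real k * (\<delta> * real n)" by (intro mult_left_mono) auto
      then show ?thesis by (simp add: d_def Nr algebra_simps)
    qed
    then have dle: "real d \<le> \<delta> * real (max m N)"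
    proof -
      assume h: "real d \<le> \<delta> * real N"
      have "\<delta> * real N \<le> \<delta> * real (max m N)" using dp by (intro mult_left_mono) auto
      then show ?thesis using h by linarith
    qed
    have mle: "m \<le> a * k"
    proof -
      have "r * real N \<le> real (a * k)"
      proof -
        have "r * real n * real k \<le> real a * real k"
          using real_nat_ceiling_ge[of "r * real n"] by (intro mult_right_mono) (auto simp: a_def)
        then show ?thesis by (simp add: Nr algebra_simps)
      qed
      then show ?thesis by (simp add: m_def)
    qed
    have "y ^ m \<le> y ^ (a * k)" using pw_le[OF mono ge_one mle] .
    also have "\<dots> = (y ^ a) ^ k" by (simp add: power_mult)
    also have "\<dots> \<le> (x ^ n * g ^ b) ^ k" using pw_mono[OF mono] n(2) by (simp add: a_def b_def)
    also have "\<dots> = x ^ N * g ^ d"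
      by (simp add: power_mult_distrib power_mult[symmetric] N_def d_def mult.commute)
    finally have "x ^ N * g ^ d \<ge> y ^ m" .
    moreover have "N > 0" using Np by simp
    ultimately show "\<exists>m n d::nat. n > 0 \<and> real m / real n \<in> U \<and>
            real d \<le> \<delta> * real (max m n) \<and> x ^ n * g ^ d \<ge> y ^ m"
      using mU dle by blast
  qed
qed

end
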